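(* For $\epsilon\ll1$ and $a$ belonging to a bounded interval, let $u_{\epsilon,a}$ be solutions of $\epsilon^2\Delta u+\mu u-|u|^2u+\epsilon af=0$ on $\mathbb{R}^2$ converging to $0$ as $|x|\to\infty$. Then there exists a constant $K>0$ such that $$|u_{\epsilon,a}(x)|\leq K\big(\sqrt{\max(\mu(x),0)}+\epsilon^{1/3}\big),\qquad\forall x\in\mathbb{R}^2.$$ As a consequence, if for every $\xi=\rho e^{i\theta}$ one considers the local coordinates $s=(s_1,s_2)$ in the basis $(e^{i\theta},ie^{i\theta})$, then the rescaled maps $\tilde u_{\epsilon,a}(s)=\epsilon^{-1/3}u_{\epsilon,a}(\xi+s\epsilon^{2/3})$ are uniformly bounded on the half-planes $[s_0,\infty)\times\mathbb{R}$, for every $s_0\in\mathbb{R}$.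
   Context: Points of $\mathbb{R}^2$ are identified with complex numbers. $\mu\in C^\infty(\mathbb{R}^2,\mathbb{R})$ is radial, $\mu(x)=\mu_{\mathrm{rad}}(|x|)$, $\mu_{\mathrm{rad}}$ smooth with an even extension, $\mu\in L^\infty$, $\mu_{\mathrm{rad}}'<0$ on $(0,\infty)$, $\mu_{\mathrm{rad}}(\rho)=0$ for a unique $\rho>0$. $f\in C^\infty(\mathbb{R}^2,\mathbb{R}^2)$, $f(x)=f_{\mathrm{rad}}(|x|)\frac{x}{|x|}$, $f_{\mathrm{rad}}$ smooth with an odd extension, $f\in L^1\cap L^\infty$, $f_{\mathrm{rad}}>0$ on $(0,\infty)$. *)

theory Defs
  imports "HOL-Analysis.Analysis"
begin

text \<open>C-infinity: differentiable everywhere, and every directional (Frechet) derivative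
  is again C-infinity (all iterated derivatives exist everywhere).\<close>
coinductive smooth :: "('a::real_normed_vector \<Rightarrow> 'b::real_normed_vector) \<Rightarrow> bool" where
  smoothI: "(\<forall>x. g differentiable (at x)) \<Longrightarrow> (\<forall>v. smooth (\<lambda>x. frechet_derivative g (at x) v))
            \<Longrightarrow> smooth g"

definition dir_deriv :: "(complex \<Rightarrow> complex) \<Rightarrow> complex \<Rightarrow> complex \<Rightarrow> complex" where
  "dir_deriv g v x = frechet_derivative g (at x) v"

definition twice_differentiable :: "(complex \<Rightarrow> complex) \<Rightarrow> bool" where
  "twice_differentiable g \<longleftrightarrow> (\<forall>x. g differentiable (at x)) \<and>
     (\<forall>v x. (\<lambda>y. dir_deriv g v y) differentiable (at x))"

definition laplacian :: "(complex \<Rightarrow> complex) \<Rightarrow> complex \<Rightarrow> complex" where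
  "laplacian g x = dir_deriv (\<lambda>y. dir_deriv g 1 y) 1 x + dir_deriv (\<lambda>y. dir_deriv g \<i> y) \<i> x"

end

theory Submission
  imports Defs
begin

lemma line_deriv:
  fixes u :: "complex \<Rightarrow> complex"
  assumes "u differentiable (at (x0 + of_real t * v))"
  shows "((\<lambda>t. u (x0 + of_real t * v)) has_vector_derivative dir_deriv u v (x0 + of_real t * v)) (at t)"
proof -
  let ?F = "frechet_derivative u (at (x0 + of_real t * v))"
  have du: "(u has_derivative ?F) (at (x0 + of_real t * v))"
    using assms frechet_derivative_works by blast
  have bl: "bounded_linear ?F" using du has_derivative_bounded_linear by blast
  have dl: "((\<lambda>t. x0 + of_real t * v) has_derivative (\<lambda>h. h *\<^sub>R v)) (at t)"
    by (auto intro!: derivative_eq_intros simp: scaleR_conv_of_real)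
  have "((u \<circ> (\<lambda>t. x0 + of_real t * v)) has_derivative (?F \<circ> (\<lambda>h. h *\<^sub>R v))) (at t)"
    by (rule diff_chain_at[OF dl du])
  moreover have "(?F \<circ> (\<lambda>h. h *\<^sub>R v)) = (\<lambda>h. h *\<^sub>R ?F v)"
    using bl by (auto simp: fun_eq_iff linear_scale bounded_linear.linear)
  ultimately show ?thesis unfolding has_vector_derivative_def dir_deriv_def o_def by simp
qed

lemma max_second_deriv:
  fixes \<Phi> \<Phi>' :: "real \<Rightarrow> real"
  assumes d1: "\<And>t. (\<Phi> has_real_derivative \<Phi>' t) (at t)"
    and d2: "(\<Phi>' has_real_derivative D) (at 0)" and mx: "\<And>t. \<Phi> t \<le> \<Phi> 0"
  shows "D \<le> 0"
proof (rule ccontr)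
  assume "\<not> D \<le> 0" hence Dp: "D > 0" by simp
  have z: "\<Phi>' 0 = 0"
    using DERIV_local_max[OF d1[of 0], of 1] mx by auto
  obtain d where d: "d > 0" "\<And>h. h > 0 \<Longrightarrow> h < d \<Longrightarrow> \<Phi>' 0 < \<Phi>' (0 + h)"
    using DERIV_pos_inc_right[OF d2 Dp] by blast
  obtain z where zz: "z > 0" "z < d/2" "\<Phi> (d/2) - \<Phi> 0 = (d/2 - 0) * \<Phi>' z"
    using MVT2[of 0 "d/2" \<Phi> \<Phi>'] d1 d(1) by auto
  have "\<Phi>' z > 0" using d(2)[of z] zz z by auto
  hence "(d/2 - 0) * \<Phi>' z > 0" using zz d by (simp add: mult_pos_pos)
  hence "\<Phi> (d/2) > \<Phi> 0" using zz(3) by linarith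
  thus False using mx[of "d/2"] by simp
qed

lemma line_second:
  fixes u :: "complex \<Rightarrow> complex" and Bl Bl' :: "real \<Rightarrow> real"
  assumes tw: "twice_differentiable u"
    and b1: "\<And>t. (Bl has_real_derivative Bl' t) (at t)"
    and b2: "(Bl' has_real_derivative B2) (at 0)"
    and mx: "\<And>t. (cmod (u (x0 + of_real t * v)))\<^sup>2 - Bl t \<le> (cmod (u x0))\<^sup>2 - Bl 0"
  shows "2 * (cmod (dir_deriv u v x0))\<^sup>2 + 2 * Re (cnj (u x0) * dir_deriv (dir_deriv u v) v x0) - B2 \<le> 0"
proof -
  define g where "g t = u (x0 + of_real t * v)" for t
  define h where "h t = dir_deriv u v (x0 + of_real t * v)" for t
  define dd where "dd = dir_deriv (dir_deriv u v) v x0"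
  have ud: "\<And>y. u differentiable (at y)" and hd: "\<And>y. (dir_deriv u v) differentiable (at y)"
    using tw unfolding twice_differentiable_def by auto
  have gd: "\<And>t. (g has_vector_derivative h t) (at t)"
    unfolding g_def h_def using line_deriv ud by blast
  have hd0: "(h has_vector_derivative dd) (at 0)"
    unfolding h_def dd_def using line_deriv[of "dir_deriv u v" x0 0 v] hd by simp
  define W where "W t = Re (cnj (g t) * g t)" for t
  define W' where "W' t = Re (cnj (g t) * h t + cnj (h t) * g t)" for t
  have Wd: "(W has_real_derivative W' t) (at t)" for t
  proof -
    have "((\<lambda>t. cnj (g t) * g t) has_vector_derivative (cnj (g t) * h t + cnj (h t) * g t)) (at t)"
      by (rule has_vector_derivative_mult[OF has_vector_derivative_cnj[OF gd] gd])
    from bounded_linear.has_vector_derivative[OF bounded_linear_Re this]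
    show ?thesis unfolding W_def W'_def has_real_derivative_iff_has_vector_derivative .
  qed
  have W'd: "(W' has_real_derivative (2 * (cmod (h 0))\<^sup>2 + 2 * Re (cnj (g 0) * dd))) (at 0)"
  proof -
    have "((\<lambda>t. cnj (g t) * h t + cnj (h t) * g t) has_vector_derivative
       ((cnj (g 0) * dd + cnj (h 0) * h 0) + (cnj (h 0) * h 0 + cnj dd * g 0))) (at 0)"
      by (intro has_vector_derivative_add has_vector_derivative_mult has_vector_derivative_cnj gd hd0)
    from bounded_linear.has_vector_derivative[OF bounded_linear_Re this]
    have "(W' has_real_derivative Re ((cnj (g 0) * dd + cnj (h 0) * h 0) + (cnj (h 0) * h 0 + cnj dd * g 0))) (at 0)"
      unfolding W'_def has_real_derivative_iff_has_vector_derivative .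
    moreover have "Re ((cnj (g 0) * dd + cnj (h 0) * h 0) + (cnj (h 0) * h 0 + cnj dd * g 0))
        = 2 * (cmod (h 0))\<^sup>2 + 2 * Re (cnj (g 0) * dd)"
      by (simp add: cmod_power2; simp add: power2_eq_square algebra_simps)
    ultimately show ?thesis by metis
  qed
  have Wc: "W t = (cmod (g t))\<^sup>2" for t
    unfolding W_def by (simp add: cmod_power2; simp add: power2_eq_square algebra_simps)
  have "2 * (cmod (h 0))\<^sup>2 + 2 * Re (cnj (g 0) * dd) - B2 \<le> 0"
  proof (rule max_second_deriv[where \<Phi> = "\<lambda>t. W t - Bl t" and \<Phi>' = "\<lambda>t. W' t - Bl' t"])
    show "((\<lambda>t. W t - Bl t) has_real_derivative W' t - Bl' t) (at t)" for t
      using Wd b1 by (intro derivative_intros) auto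
    show "((\<lambda>t. W' t - Bl' t) has_real_derivative 2 * (cmod (h 0))\<^sup>2 + 2 * Re (cnj (g 0) * dd) - B2) (at 0)"
      using W'd b2 by (intro derivative_intros) auto
    show "W t - Bl t \<le> W 0 - Bl 0" for t
      using mx[of t] unfolding Wc g_def by simp
  qed
  thus ?thesis unfolding h_def g_def dd_def by simp
qed

definition qf :: "real \<Rightarrow> real \<Rightarrow> real \<Rightarrow> real" where
  "qf \<Lambda> \<delta> \<tau> = \<Lambda> * (\<tau> + sqrt (\<tau>\<^sup>2 + \<delta>\<^sup>2))"
definition qf1 :: "real \<Rightarrow> real \<Rightarrow> real \<Rightarrow> real" where
  "qf1 \<Lambda> \<delta> \<tau> = \<Lambda> * (1 + \<tau> / sqrt (\<tau>\<^sup>2 + \<delta>\<^sup>2))"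
definition qf2 :: "real \<Rightarrow> real \<Rightarrow> real \<Rightarrow> real" where
  "qf2 \<Lambda> \<delta> \<tau> = \<Lambda> * \<delta>\<^sup>2 / (sqrt (\<tau>\<^sup>2 + \<delta>\<^sup>2))^3"

lemma qf_deriv: assumes "\<delta> > 0" shows "(qf \<Lambda> \<delta> has_real_derivative qf1 \<Lambda> \<delta> \<tau>) (at \<tau>)"
proof -
  have p: "\<tau>\<^sup>2 + \<delta>\<^sup>2 > 0" using assms by (simp add: add_nonneg_pos)
  show ?thesis unfolding qf_def[abs_def] qf1_def
    using p by (auto intro!: derivative_eq_intros simp: field_simps)
qed

lemma qf_aux: fixes S A \<tau> \<delta> \<Lambda> :: real assumes "S > 0" "S^2 = A" "A = \<tau>\<^sup>2 + \<delta>\<^sup>2"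
  shows "(S - \<tau> * (inverse S * \<tau>)) * \<Lambda> / A = \<Lambda> * \<delta>\<^sup>2 / S ^ 3"
proof -
  have "(S - \<tau> * (inverse S * \<tau>)) = (S^2 - \<tau>^2) / S" using assms(1)
    by (simp add: inverse_eq_divide divide_simps power2_eq_square)
  also have "\<dots> = \<delta>\<^sup>2 / S" using assms(2,3) by simp
  finally show ?thesis using assms by (simp add: power3_eq_cube power2_eq_square field_simps; simp add: algebra_simps)
qed

lemma qf1_deriv: assumes "\<delta> > 0" shows "(qf1 \<Lambda> \<delta> has_real_derivative qf2 \<Lambda> \<delta> \<tau>) (at \<tau>)"
proof -
  have p: "\<tau>\<^sup>2 + \<delta>\<^sup>2 > 0" using assms by (simp add: add_nonneg_pos)
  have s: "sqrt (\<tau>\<^sup>2 + \<delta>\<^sup>2) ^ 2 = \<tau>\<^sup>2 + \<delta>\<^sup>2" using p by simp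
  show ?thesis unfolding qf1_def[abs_def] qf2_def
    using p apply (auto intro!: derivative_eq_intros)
    apply (rule qf_aux) using p by auto
qed

lemma bar_line1:
  assumes "\<delta> > 0"
  shows "((\<lambda>t. c + qf \<Lambda> \<delta> (\<alpha> - (\<beta> + t)\<^sup>2)) has_real_derivative
           qf1 \<Lambda> \<delta> (\<alpha> - (\<beta> + t)\<^sup>2) * (- 2 * (\<beta> + t))) (at t)"
proof -
  have "((\<lambda>t. qf \<Lambda> \<delta> (\<alpha> - (\<beta> + t)\<^sup>2)) has_real_derivative
           qf1 \<Lambda> \<delta> (\<alpha> - (\<beta> + t)\<^sup>2) * (- 2 * (\<beta> + t))) (at t)"
    by (rule DERIV_chain2[OF qf_deriv[OF assms]]) (auto intro!: derivative_eq_intros)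
  thus ?thesis by (auto intro!: derivative_eq_intros)
qed

lemma bar_line2:
  assumes "\<delta> > 0"
  shows "((\<lambda>t. qf1 \<Lambda> \<delta> (\<alpha> - (\<beta> + t)\<^sup>2) * (- 2 * (\<beta> + t))) has_real_derivative
           qf2 \<Lambda> \<delta> (\<alpha> - \<beta>\<^sup>2) * (4 * \<beta>\<^sup>2) - 2 * qf1 \<Lambda> \<delta> (\<alpha> - \<beta>\<^sup>2)) (at 0)"
proof -
  have "((\<lambda>t. qf1 \<Lambda> \<delta> (\<alpha> - (\<beta> + t)\<^sup>2)) has_real_derivative
           qf2 \<Lambda> \<delta> (\<alpha> - (\<beta> + 0)\<^sup>2) * (- 2 * (\<beta> + 0))) (at 0)"
    by (rule DERIV_chain2[OF qf1_deriv[OF assms]]) (auto intro!: derivative_eq_intros)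
  hence "((\<lambda>t. qf1 \<Lambda> \<delta> (\<alpha> - (\<beta> + t)\<^sup>2) * (- 2 * (\<beta> + t))) has_real_derivative
           qf2 \<Lambda> \<delta> (\<alpha> - (\<beta> + 0)\<^sup>2) * (- 2 * (\<beta> + 0)) * (- 2 * (\<beta> + 0)) + qf1 \<Lambda> \<delta> (\<alpha> - (\<beta> + 0)\<^sup>2) * (-2)) (at 0)"
    by (auto intro!: derivative_eq_intros)
  thus ?thesis by (simp add: power2_eq_square algebra_simps)
qed

lemma sqrt_bounds: fixes \<tau> \<delta> :: real assumes "\<delta> > 0"
  shows "\<bar>\<tau>\<bar> \<le> sqrt (\<tau>\<^sup>2 + \<delta>\<^sup>2)" "\<delta> \<le> sqrt (\<tau>\<^sup>2 + \<delta>\<^sup>2)" "sqrt (\<tau>\<^sup>2 + \<delta>\<^sup>2) \<le> \<bar>\<tau>\<bar> + \<delta>"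
proof -
  show "\<bar>\<tau>\<bar> \<le> sqrt (\<tau>\<^sup>2 + \<delta>\<^sup>2)" by (rule real_le_rsqrt) simp
  show "\<delta> \<le> sqrt (\<tau>\<^sup>2 + \<delta>\<^sup>2)" by (rule real_le_rsqrt) simp
  show "sqrt (\<tau>\<^sup>2 + \<delta>\<^sup>2) \<le> \<bar>\<tau>\<bar> + \<delta>"
  proof (rule power2_le_imp_le)
    have "\<tau>\<^sup>2 + \<delta>\<^sup>2 \<le> (\<bar>\<tau>\<bar> + \<delta>)\<^sup>2" using assms
      by (simp add: power2_eq_square algebra_simps)
    thus "(sqrt (\<tau>\<^sup>2 + \<delta>\<^sup>2))\<^sup>2 \<le> (\<bar>\<tau>\<bar> + \<delta>)\<^sup>2" by simp
    show "0 \<le> \<bar>\<tau>\<bar> + \<delta>" using assms by simp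
  qed
qed

lemma qf_lower: assumes "\<delta> > 0" "\<Lambda> \<ge> 0" shows "2 * \<Lambda> * max \<tau> 0 \<le> qf \<Lambda> \<delta> \<tau>"
proof -
  have "2 * max \<tau> 0 \<le> \<tau> + sqrt (\<tau>\<^sup>2 + \<delta>\<^sup>2)" using sqrt_bounds(1)[OF assms(1), of \<tau>] by (smt (verit))
  hence "\<Lambda> * (2 * max \<tau> 0) \<le> \<Lambda> * (\<tau> + sqrt (\<tau>\<^sup>2 + \<delta>\<^sup>2))" using assms(2) by (rule mult_left_mono)
  thus ?thesis unfolding qf_def by (simp add: algebra_simps)
qed

lemma qf_upper: assumes "\<delta> > 0" "\<Lambda> \<ge> 0" shows "qf \<Lambda> \<delta> \<tau> \<le> 2 * \<Lambda> * max \<tau> 0 + \<Lambda> * \<delta>"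
proof -
  have "\<tau> + sqrt (\<tau>\<^sup>2 + \<delta>\<^sup>2) \<le> 2 * max \<tau> 0 + \<delta>" using sqrt_bounds(3)[OF assms(1), of \<tau>] by (smt (verit))
  hence "\<Lambda> * (\<tau> + sqrt (\<tau>\<^sup>2 + \<delta>\<^sup>2)) \<le> \<Lambda> * (2 * max \<tau> 0 + \<delta>)" using assms(2) by (rule mult_left_mono)
  thus ?thesis unfolding qf_def by (simp add: algebra_simps)
qed

lemma qf1_nonneg: assumes "\<delta> > 0" "\<Lambda> \<ge> 0" shows "qf1 \<Lambda> \<delta> \<tau> \<ge> 0"
proof -
  define S where "S = sqrt (\<tau>\<^sup>2 + \<delta>\<^sup>2)"
  have S: "\<bar>\<tau>\<bar> \<le> S" "S > 0"
    using sqrt_bounds[OF assms(1), of \<tau>] assms(1) unfolding S_def by (auto simp: add_nonneg_pos)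
  have "- S \<le> \<tau>" using S(1) by linarith
  hence "- 1 \<le> \<tau> / S" using S(2) by (simp add: le_divide_eq)
  hence "1 + \<tau> / S \<ge> 0" by linarith
  thus ?thesis unfolding qf1_def S_def[symmetric] using assms(2) by simp
qed

lemma qf2_bound: assumes "\<delta> > 0" "\<delta> \<le> 1" "\<Lambda> \<ge> 0" "\<rho>2 \<ge> 0"
  shows "qf2 \<Lambda> \<delta> \<tau> * (\<rho>2 - \<tau>) \<le> \<Lambda> * (\<rho>2 + 1) / \<delta>"
proof -
  define S where "S = sqrt (\<tau>\<^sup>2 + \<delta>\<^sup>2)"
  have S: "\<bar>\<tau>\<bar> \<le> S" "\<delta> \<le> S" using sqrt_bounds[OF assms(1), of \<tau>] S_def by auto
  have Sp: "S > 0" using S assms by linarith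
  have e1: "\<delta>\<^sup>2 / S^3 \<le> 1 / \<delta>"
  proof -
    have "\<delta>^3 \<le> S^3" using S assms by (intro power_mono) auto
    hence "\<delta>\<^sup>2 * \<delta> \<le> S^3" by (simp add: power3_eq_cube power2_eq_square)
    thus ?thesis using Sp assms by (simp add: divide_simps)
  qed
  have e2: "\<delta>\<^sup>2 * (- \<tau>) / S^3 \<le> 1 / \<delta>"
  proof -
    have "\<delta>\<^sup>2 * (- \<tau>) \<le> \<delta>\<^sup>2 * S" using S by (intro mult_left_mono) auto
    hence "\<delta>\<^sup>2 * (- \<tau>) / S^3 \<le> \<delta>\<^sup>2 * S / S^3" using Sp by (intro divide_right_mono) auto
    also have "\<dots> = \<delta>\<^sup>2 / S\<^sup>2" using Sp by (simp add: power2_eq_square power3_eq_cube)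
    also have "\<dots> \<le> 1" using S assms Sp by (simp add: power_mono)
    also have "1 \<le> 1 / \<delta>" using assms by simp
    finally show ?thesis .
  qed
  have "qf2 \<Lambda> \<delta> \<tau> * (\<rho>2 - \<tau>) = \<Lambda> * (\<rho>2 * (\<delta>\<^sup>2 / S^3) + \<delta>\<^sup>2 * (- \<tau>) / S^3)"
    unfolding qf2_def S_def[symmetric] by (simp add: algebra_simps diff_divide_distrib[symmetric] add_divide_distrib[symmetric])
  also have "\<dots> \<le> \<Lambda> * (\<rho>2 * (1/\<delta>) + 1/\<delta>)"
    using e1 e2 assms by (intro mult_left_mono add_mono) auto
  also have "\<dots> = \<Lambda> * (\<rho>2 + 1) / \<delta>" by (simp add: algebra_simps add_divide_distrib)
  finally show ?thesis .
qed

lemma radial_facts: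
  fixes \<mu>r :: "real \<Rightarrow> real"
  assumes diff: "\<And>x. \<mu>r differentiable (at x)"
    and decr: "\<And>t. t > 0 \<Longrightarrow> deriv \<mu>r t < 0"
    and rp: "\<rho> > 0" and r0: "\<mu>r \<rho> = 0"
    and bd: "\<And>r. r \<ge> 0 \<Longrightarrow> \<mu>r r \<le> M"
  shows "\<exists>\<Lambda>>0. \<exists>C1>0. (\<forall>r\<ge>0. \<mu>r r > 0 \<longrightarrow> r < \<rho>) \<and>
     (\<forall>r. 0 \<le> r \<and> r \<le> \<rho> \<longrightarrow> \<mu>r r \<le> \<Lambda> * (\<rho>\<^sup>2 - r\<^sup>2)) \<and>
     (\<forall>r. 0 \<le> r \<and> r \<le> \<rho> \<longrightarrow> \<rho>\<^sup>2 - r\<^sup>2 \<le> C1 * \<mu>r r)"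
proof -
  have D: "\<And>x. (\<mu>r has_real_derivative deriv \<mu>r x) (at x)"
    using diff DERIV_deriv_iff_real_differentiable by blast
  have cont: "continuous_on S \<mu>r" for S
    using D DERIV_isCont continuous_at_imp_continuous_on by blast
  have sdec: "\<mu>r a > \<mu>r b" if "0 \<le> a" "a < b" for a b
    by (rule DERIV_neg_imp_decreasing_open[OF that(2)]) (use D decr that cont in \<open>force+\<close>)
  have dec: "\<mu>r a \<ge> \<mu>r b" if "0 \<le> a" "a \<le> b" for a b
    using sdec[OF that(1), of b] that by (cases "a = b") auto
  have R1: "\<forall>r\<ge>0. \<mu>r r > 0 \<longrightarrow> r < \<rho>"
    using dec rp r0 by (metis less_le_not_le linorder_not_le)
  define d where "d = deriv \<mu>r \<rho>"
  have dn: "d < 0" using decr rp d_def by simp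
  have "((\<lambda>y. (\<mu>r y - \<mu>r \<rho>) / (y - \<rho>)) \<longlongrightarrow> d) (at \<rho>)"
    using D[of \<rho>] unfolding d_def has_field_derivative_iff .
  then obtain \<eta> where \<eta>: "\<eta> > 0" "\<And>y. y \<noteq> \<rho> \<Longrightarrow> dist y \<rho> < \<eta> \<Longrightarrow>
      dist ((\<mu>r y - \<mu>r \<rho>) / (y - \<rho>)) d < - d / 2"
  proof -
    have "-d/2 > 0" using dn by simp
    with \<open>((\<lambda>y. (\<mu>r y - \<mu>r \<rho>) / (y - \<rho>)) \<longlongrightarrow> d) (at \<rho>)\<close>
    have "eventually (\<lambda>y. dist ((\<mu>r y - \<mu>r \<rho>) / (y - \<rho>)) d < -d/2) (at \<rho>)"
      by (rule tendstoD)
    thus ?thesis using that unfolding eventually_at by auto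
  qed
  define \<eta>1 where "\<eta>1 = min \<eta> \<rho>"
  have \<eta>1: "\<eta>1 > 0" "\<eta>1 \<le> \<rho>" "\<eta>1 \<le> \<eta>" using \<eta> rp \<eta>1_def by auto
  define m where "m = \<mu>r (\<rho> - \<eta>1)"
  have mp: "m > 0" using sdec[of "\<rho> - \<eta>1" \<rho>] \<eta>1 r0 m_def by simp
  define M' where "M' = max M 0"
  define L where "L = max (- 3 * d / 2) (M' / \<eta>1)"
  define c where "c = min (- d / 2) (m / \<rho>)"
  have cp: "c > 0" using dn mp rp c_def by simp
  have Lp: "L > 0" using dn L_def by simp
  have lin: "c * (\<rho> - r) \<le> \<mu>r r \<and> \<mu>r r \<le> L * (\<rho> - r)" if r: "0 \<le> r" "r \<le> \<rho>" for r
  proof (cases "r > \<rho> - \<eta>1")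
    case True
    show ?thesis
    proof (cases "r = \<rho>")
      case True thus ?thesis using r0 by simp
    next
      case False
      hence rl: "r < \<rho>" using r by simp
      define Q where "Q = \<mu>r r / (r - \<rho>)"
      have "dist ((\<mu>r r - \<mu>r \<rho>) / (r - \<rho>)) d < - d / 2"
        using \<eta>(2)[of r] False True \<eta>1 rl by (auto simp: dist_real_def)
      hence "dist Q d < - d / 2" using r0 Q_def by simp
      hence q: "3 * d / 2 < Q" "Q < d / 2"
        by (auto simp: dist_real_def abs_less_iff)
      have e: "\<mu>r r = (- Q) * (\<rho> - r)" using rl Q_def by (simp add: field_simps)
      have "c * (\<rho> - r) \<le> (- d / 2) * (\<rho> - r)" using c_def rl by (intro mult_right_mono) auto
      also have "\<dots> \<le> \<mu>r r" using q rl e by (subst e) (intro mult_right_mono, auto)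
      finally have a1: "c * (\<rho> - r) \<le> \<mu>r r" .
      have "\<mu>r r \<le> (- 3 * d / 2) * (\<rho> - r)" using q rl e by (subst e) (intro mult_right_mono, auto)
      also have "\<dots> \<le> L * (\<rho> - r)" using L_def rl by (intro mult_right_mono) auto
      finally show ?thesis using a1 by simp
    qed
  next
    case False
    hence rl: "r \<le> \<rho> - \<eta>1" by simp
    have "\<mu>r r \<ge> m" unfolding m_def using dec[OF r(1) rl] .
    hence "c * (\<rho> - r) \<le> \<mu>r r"
    proof -
      have "c * (\<rho> - r) \<le> (m / \<rho>) * \<rho>" using c_def r cp mp rp
        by (intro mult_mono) auto
      thus ?thesis using rp \<open>\<mu>r r \<ge> m\<close> by simp
    qed
    moreover have "\<mu>r r \<le> L * (\<rho> - r)"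
    proof -
      have "\<mu>r r \<le> M'" using bd[OF r(1)] M'_def by simp
      also have "\<dots> = (M' / \<eta>1) * \<eta>1" using \<eta>1 by simp
      also have "\<dots> \<le> L * (\<rho> - r)" using L_def rl \<eta>1 M'_def Lp
        by (intro mult_mono) auto
      finally show ?thesis .
    qed
    ultimately show ?thesis by simp
  qed
  have P2: "\<forall>r. 0 \<le> r \<and> r \<le> \<rho> \<longrightarrow> \<mu>r r \<le> L / \<rho> * (\<rho>\<^sup>2 - r\<^sup>2)"
  proof (intro allI impI)
    fix r assume r: "0 \<le> r \<and> r \<le> \<rho>"
    have f: "\<rho>\<^sup>2 - r\<^sup>2 = (\<rho> - r) * (\<rho> + r)" by (simp add: power2_eq_square algebra_simps)
    have "\<mu>r r \<le> L * (\<rho> - r)" using lin r by blast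
    also have "\<dots> = (L / \<rho>) * ((\<rho> - r) * \<rho>)" using rp by simp
    also have "\<dots> \<le> (L / \<rho>) * (\<rho>\<^sup>2 - r\<^sup>2)" unfolding f using r rp Lp
      by (intro mult_left_mono) auto
    finally show "\<mu>r r \<le> L / \<rho> * (\<rho>\<^sup>2 - r\<^sup>2)" .
  qed
  have P3: "\<forall>r. 0 \<le> r \<and> r \<le> \<rho> \<longrightarrow> \<rho>\<^sup>2 - r\<^sup>2 \<le> 2 * \<rho> / c * \<mu>r r"
  proof (intro allI impI)
    fix r assume r: "0 \<le> r \<and> r \<le> \<rho>"
    have f: "\<rho>\<^sup>2 - r\<^sup>2 = (\<rho> - r) * (\<rho> + r)" by (simp add: power2_eq_square algebra_simps)
    have "\<rho>\<^sup>2 - r\<^sup>2 \<le> (\<rho> - r) * (2 * \<rho>)" unfolding f using r by (intro mult_left_mono) auto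
    also have "\<dots> = (2 * \<rho> / c) * (c * (\<rho> - r))" using cp by simp
    also have "\<dots> \<le> (2 * \<rho> / c) * \<mu>r r" using lin r cp rp by (intro mult_left_mono) auto
    finally show "\<rho>\<^sup>2 - r\<^sup>2 \<le> 2 * \<rho> / c * \<mu>r r" .
  qed
  have pos: "L / \<rho> > 0" "2 * \<rho> / c > 0" using Lp rp cp by auto
  show ?thesis
    by (rule exI[of _ "L/\<rho>"], rule conjI[OF pos(1)], rule exI[of _ "2*\<rho>/c"], rule conjI[OF pos(2)])
       (intro conjI R1 P2 P3)
qed

lemma eq_rearr: fixes X Y Z W :: complex assumes "X + Y - Z + W = 0" shows "X = - Y + Z - W"
  using assms by (simp add: algebra_simps)

lemma re_expand: fixes u f :: complex and m w k :: real
  assumes "cnj u * u = of_real w"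
  shows "Re (cnj u * (- (of_real m * u) + of_real w * u - of_real k * f)) = - m * w + w * w - k * Re (cnj u * f)"
proof -
  have "cnj u * (- (of_real m * u) + of_real w * u - of_real k * f)
      = - (of_real m * (cnj u * u)) + of_real w * (cnj u * u) - of_real k * (cnj u * f)"
    by (simp add: ring_distribs mult.left_commute)
  also have "\<dots> = - of_real (m * w) + of_real (w * w) - of_real k * (cnj u * f)"
    unfolding assms by simp
  finally show ?thesis by simp
qed

lemma core:
  fixes u f :: "complex \<Rightarrow> complex" and \<mu> :: "complex \<Rightarrow> real"
  assumes tw: "twice_differentiable u"
    and eq: "\<forall>x. complex_of_real (\<epsilon>\<^sup>2) * laplacian u x + complex_of_real (\<mu> x) * u x
               - complex_of_real ((cmod (u x))\<^sup>2) * u x + complex_of_real (\<epsilon> * a) * f x = 0"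
    and lim: "(u \<longlongrightarrow> 0) at_infinity"
    and e: "e > 0" "e \<le> 1" and ee: "\<epsilon> = e ^ 3"
    and aA: "\<bar>a\<bar> \<le> A" and M: "M \<ge> 0" "\<And>x. cmod (f x) \<le> M"
    and Lp: "\<Lambda> > 0" and mub: "\<And>x. \<mu> x \<le> \<Lambda> * max (\<rho>\<^sup>2 - (cmod x)\<^sup>2) 0"
    and K0: "K0 = 1 + 4 * A * M + 8 * \<Lambda> * (\<rho>\<^sup>2 + 1)"
  shows "(cmod (u x))\<^sup>2 \<le> K0\<^sup>2 * e\<^sup>2 + qf \<Lambda> (e\<^sup>2) (\<rho>\<^sup>2 - (cmod x)\<^sup>2)"
proof (rule ccontr)
  define \<delta> where "\<delta> = e\<^sup>2"
  have \<delta>: "\<delta> > 0" "\<delta> \<le> 1" using e \<delta>_def by (auto simp: power_le_one)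
  define c where "c = K0\<^sup>2 * \<delta>"
  define Bar where "Bar x = c + qf \<Lambda> \<delta> (\<rho>\<^sup>2 - (cmod x)\<^sup>2)" for x
  define F where "F x = (cmod (u x))\<^sup>2 - Bar x" for x
  assume "\<not> ?thesis"
  hence Fx1: "F x > 0" unfolding F_def Bar_def c_def \<delta>_def by simp
  have A0: "A \<ge> 0" using aA by simp
  have K1: "K0 \<ge> 1" using K0 A0 M Lp by simp
  have qf0: "qf \<Lambda> \<delta> \<tau> \<ge> 0" for \<tau>
    using qf_lower[OF \<delta>(1), of \<Lambda> \<tau>] Lp by (smt (verit) mult_nonneg_nonneg max.cobounded2)
  have ud: "\<And>y. u differentiable (at y)" using tw unfolding twice_differentiable_def by auto
  have ucont: "continuous_on S u" for S
    using ud differentiable_imp_continuous_on differentiable_at_imp_differentiable_on by blast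
  have Fcont: "continuous_on S F" for S
    unfolding F_def Bar_def qf_def
    by (intro continuous_intros ucont)
  have K0e: "K0 * e > 0" using K1 e by simp
  from lim have "eventually (\<lambda>x. dist (u x) 0 < K0 * e) at_infinity"
    using K0e tendsto_iff by blast
  then obtain b where b: "\<And>x. b \<le> cmod x \<Longrightarrow> cmod (u x) < K0 * e"
    unfolding eventually_at_infinity by auto
  have Fout: "F y < 0" if "b \<le> cmod y" for y
  proof -
    have "cmod (u y) < K0 * e" using b that by blast
    hence "(cmod (u y))\<^sup>2 < (K0 * e)\<^sup>2" by (intro power_strict_mono) auto
    hence "(cmod (u y))\<^sup>2 < c" unfolding c_def \<delta>_def by (simp add: power_mult_distrib)
    thus ?thesis unfolding F_def Bar_def using qf0 by (smt (verit))
  qed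
  define S where "S = cball (0::complex) \<bar>b\<bar>"
  have x1S: "x \<in> S"
  proof -
    have "\<not> b \<le> cmod x" using Fout[of x] Fx1 by auto
    thus ?thesis unfolding S_def by (simp add: dist_norm)
  qed
  obtain x0 where x0: "x0 \<in> S" "\<And>y. y \<in> S \<Longrightarrow> F y \<le> F x0"
    using continuous_attains_sup[of S F] x1S Fcont unfolding S_def by auto
  have Fx0: "F x0 > 0" using x0(2)[OF x1S] Fx1 by simp
  have gmax: "F y \<le> F x0" for y
  proof (cases "y \<in> S")
    case True thus ?thesis using x0 by blast
  next
    case False hence "b \<le> cmod y" unfolding S_def by (auto simp: dist_norm)
    thus ?thesis using Fout Fx0 by fastforce
  qed
  define \<tau> where "\<tau> = \<rho>\<^sup>2 - (cmod x0)\<^sup>2"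
  have cm: "(cmod x0)\<^sup>2 = (Re x0)\<^sup>2 + (Im x0)\<^sup>2" by (simp add: cmod_power2)
  have L1: "2 * (cmod (dir_deriv u 1 x0))\<^sup>2 + 2 * Re (cnj (u x0) * dir_deriv (dir_deriv u 1) 1 x0)
      - (qf2 \<Lambda> \<delta> \<tau> * (4 * (Re x0)\<^sup>2) - 2 * qf1 \<Lambda> \<delta> \<tau>) \<le> 0"
  proof -
    have "2 * (cmod (dir_deriv u 1 x0))\<^sup>2 + 2 * Re (cnj (u x0) * dir_deriv (dir_deriv u 1) 1 x0)
      - (qf2 \<Lambda> \<delta> ((\<rho>\<^sup>2 - (Im x0)\<^sup>2) - (Re x0)\<^sup>2) * (4 * (Re x0)\<^sup>2) - 2 * qf1 \<Lambda> \<delta> ((\<rho>\<^sup>2 - (Im x0)\<^sup>2) - (Re x0)\<^sup>2)) \<le> 0"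
    proof (rule line_second[OF tw bar_line1[OF \<delta>(1)] bar_line2[OF \<delta>(1)]])
      fix t
      have "Bar (x0 + of_real t * 1) = c + qf \<Lambda> \<delta> ((\<rho>\<^sup>2 - (Im x0)\<^sup>2) - (Re x0 + t)\<^sup>2)"
        unfolding Bar_def by (simp add: cmod_power2 algebra_simps)
      moreover have "Bar x0 = c + qf \<Lambda> \<delta> ((\<rho>\<^sup>2 - (Im x0)\<^sup>2) - (Re x0 + 0)\<^sup>2)"
        unfolding Bar_def by (simp add: cmod_power2 algebra_simps)
      ultimately show "(cmod (u (x0 + complex_of_real t * 1)))\<^sup>2 - (c + qf \<Lambda> \<delta> ((\<rho>\<^sup>2 - (Im x0)\<^sup>2) - (Re x0 + t)\<^sup>2))
         \<le> (cmod (u x0))\<^sup>2 - (c + qf \<Lambda> \<delta> ((\<rho>\<^sup>2 - (Im x0)\<^sup>2) - (Re x0 + 0)\<^sup>2))"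
        using gmax[of "x0 + of_real t * 1"] unfolding F_def by simp
    qed
    moreover have "(\<rho>\<^sup>2 - (Im x0)\<^sup>2) - (Re x0)\<^sup>2 = \<tau>" unfolding \<tau>_def cm by simp
    ultimately show ?thesis by simp
  qed
  have L2: "2 * (cmod (dir_deriv u \<i> x0))\<^sup>2 + 2 * Re (cnj (u x0) * dir_deriv (dir_deriv u \<i>) \<i> x0)
      - (qf2 \<Lambda> \<delta> \<tau> * (4 * (Im x0)\<^sup>2) - 2 * qf1 \<Lambda> \<delta> \<tau>) \<le> 0"
  proof -
    have "2 * (cmod (dir_deriv u \<i> x0))\<^sup>2 + 2 * Re (cnj (u x0) * dir_deriv (dir_deriv u \<i>) \<i> x0)
      - (qf2 \<Lambda> \<delta> ((\<rho>\<^sup>2 - (Re x0)\<^sup>2) - (Im x0)\<^sup>2) * (4 * (Im x0)\<^sup>2) - 2 * qf1 \<Lambda> \<delta> ((\<rho>\<^sup>2 - (Re x0)\<^sup>2) - (Im x0)\<^sup>2)) \<le> 0"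
    proof (rule line_second[OF tw bar_line1[OF \<delta>(1)] bar_line2[OF \<delta>(1)]])
      fix t
      have "Bar (x0 + of_real t * \<i>) = c + qf \<Lambda> \<delta> ((\<rho>\<^sup>2 - (Re x0)\<^sup>2) - (Im x0 + t)\<^sup>2)"
        unfolding Bar_def by (simp add: cmod_power2 algebra_simps)
      moreover have "Bar x0 = c + qf \<Lambda> \<delta> ((\<rho>\<^sup>2 - (Re x0)\<^sup>2) - (Im x0 + 0)\<^sup>2)"
        unfolding Bar_def by (simp add: cmod_power2 algebra_simps)
      ultimately show "(cmod (u (x0 + complex_of_real t * \<i>)))\<^sup>2 - (c + qf \<Lambda> \<delta> ((\<rho>\<^sup>2 - (Re x0)\<^sup>2) - (Im x0 + t)\<^sup>2))
         \<le> (cmod (u x0))\<^sup>2 - (c + qf \<Lambda> \<delta> ((\<rho>\<^sup>2 - (Re x0)\<^sup>2) - (Im x0 + 0)\<^sup>2))"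
        using gmax[of "x0 + of_real t * \<i>"] unfolding F_def by simp
    qed
    moreover have "(\<rho>\<^sup>2 - (Re x0)\<^sup>2) - (Im x0)\<^sup>2 = \<tau>" unfolding \<tau>_def cm by simp
    ultimately show ?thesis by simp
  qed
  have lap: "laplacian u x0 = dir_deriv (dir_deriv u 1) 1 x0 + dir_deriv (dir_deriv u \<i>) \<i> x0"
    unfolding laplacian_def by simp
  have q1: "qf1 \<Lambda> \<delta> \<tau> \<ge> 0" using qf1_nonneg[OF \<delta>(1)] Lp by simp
  have "2 * Re (cnj (u x0) * laplacian u x0) \<le> 4 * qf2 \<Lambda> \<delta> \<tau> * (\<rho>\<^sup>2 - \<tau>) - 4 * qf1 \<Lambda> \<delta> \<tau>"
  proof -
    have "(\<rho>\<^sup>2 - \<tau>) = (Re x0)\<^sup>2 + (Im x0)\<^sup>2" unfolding \<tau>_def cm by simp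
    hence e1: "qf2 \<Lambda> \<delta> \<tau> * (4 * (Re x0)\<^sup>2) + qf2 \<Lambda> \<delta> \<tau> * (4 * (Im x0)\<^sup>2) = 4 * qf2 \<Lambda> \<delta> \<tau> * (\<rho>\<^sup>2 - \<tau>)"
      by (simp add: algebra_simps)
    have e2: "Re (cnj (u x0) * laplacian u x0) = Re (cnj (u x0) * dir_deriv (dir_deriv u 1) 1 x0) + Re (cnj (u x0) * dir_deriv (dir_deriv u \<i>) \<i> x0)"
      unfolding lap by (simp add: distrib_left)
    have "(cmod (dir_deriv u 1 x0))\<^sup>2 \<ge> 0" "(cmod (dir_deriv u \<i> x0))\<^sup>2 \<ge> 0" by auto
    thus ?thesis using L1 L2 e1 e2 by linarith
  qed
  also have "\<dots> \<le> 4 * (\<Lambda> * (\<rho>\<^sup>2 + 1) / \<delta>)"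
    using qf2_bound[OF \<delta> less_imp_le[OF Lp], of "\<rho>\<^sup>2" \<tau>] q1 by simp
  finally have up: "2 * Re (cnj (u x0) * laplacian u x0) \<le> 4 * (\<Lambda> * (\<rho>\<^sup>2 + 1) / \<delta>)" .
  define n where "n = cmod (u x0)"
  define w where "w = n\<^sup>2"
  have n0: "n \<ge> 0" unfolding n_def by simp
  have eq0: "complex_of_real (\<epsilon>\<^sup>2) * laplacian u x0 = - (complex_of_real (\<mu> x0) * u x0)
     + complex_of_real w * u x0 - complex_of_real (\<epsilon> * a) * f x0"
    unfolding w_def n_def by (rule eq_rearr[OF eq[rule_format, of x0]])
  have "\<epsilon>\<^sup>2 * Re (cnj (u x0) * laplacian u x0) = Re (cnj (u x0) * (complex_of_real (\<epsilon>\<^sup>2) * laplacian u x0))"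
    by (simp add: algebra_simps)
  also have "\<dots> = - \<mu> x0 * w + w * w - \<epsilon> * a * Re (cnj (u x0) * f x0)"
  proof -
    have cu: "cnj (u x0) * u x0 = complex_of_real w"
      unfolding w_def n_def using complex_norm_square[of "u x0"] by (simp add: mult.commute)
    show ?thesis unfolding eq0 by (rule re_expand[OF cu])
  qed
  finally have eqr: "\<epsilon>\<^sup>2 * Re (cnj (u x0) * laplacian u x0) = - \<mu> x0 * w + w * w - \<epsilon> * a * Re (cnj (u x0) * f x0)" .
  define R where "R = Re (cnj (u x0) * f x0)"
  have Bx0: "Bar x0 < w" using Fx0 unfolding F_def w_def n_def by simp
  have Bc: "c \<le> Bar x0" unfolding Bar_def using qf0 by simp
  have c0: "c \<ge> 0" unfolding c_def using \<delta> by simp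
  have mu2: "\<mu> x0 \<le> Bar x0 / 2"
  proof -
    define X where "X = \<Lambda> * max \<tau> 0"
    have a1: "\<mu> x0 \<le> X" using mub[of x0] unfolding \<tau>_def X_def .
    have a2: "2 * X \<le> qf \<Lambda> \<delta> \<tau>" using qf_lower[OF \<delta>(1), of \<Lambda> \<tau>] Lp unfolding X_def by simp
    have "Bar x0 = c + qf \<Lambda> \<delta> \<tau>" unfolding Bar_def \<tau>_def ..
    thus ?thesis using a1 a2 c0 by linarith
  qed
  have w0: "w \<ge> 0" unfolding w_def by simp
  have muw: "\<mu> x0 * w \<le> w * w / 2"
  proof -
    have "\<mu> x0 \<le> w / 2" using mu2 Bx0 by linarith
    hence "\<mu> x0 * w \<le> (w / 2) * w" using w0 by (rule mult_right_mono)
    thus ?thesis by simp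
  qed
  have Rb: "\<bar>R\<bar> \<le> n * M"
  proof -
    have "\<bar>R\<bar> \<le> cmod (cnj (u x0) * f x0)" unfolding R_def by (rule abs_Re_le_cmod)
    also have "\<dots> = n * cmod (f x0)" unfolding n_def by (simp add: norm_mult)
    also have "\<dots> \<le> n * M" using M(2)[of x0] n0 by (rule mult_left_mono)
    finally show ?thesis .
  qed
  have eps0: "\<epsilon> \<ge> 0" using ee e by simp
  have aR: "\<epsilon> * a * R \<le> \<epsilon> * A * (n * M)"
  proof -
    have "\<epsilon> * a * R \<le> \<bar>\<epsilon> * a * R\<bar>" by simp
    also have "\<dots> = \<epsilon> * (\<bar>a\<bar> * \<bar>R\<bar>)" using eps0 by (simp add: abs_mult)
    also have "\<dots> \<le> \<epsilon> * (A * (n * M))" using aA Rb eps0 A0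
      by (intro mult_left_mono mult_mono) auto
    finally show ?thesis by simp
  qed
  have cK: "c = (K0 * e)\<^sup>2" unfolding c_def \<delta>_def by (simp add: power_mult_distrib)
  have nK: "K0 * e < n"
  proof -
    have "(K0 * e)\<^sup>2 < n\<^sup>2" using Bx0 Bc cK w_def by linarith
    thus ?thesis using n0 by (rule power_less_imp_less_base)
  qed
  have K3: "4 * A * M \<le> K0 ^ 3" and K4: "8 * \<Lambda> * (\<rho>\<^sup>2 + 1) \<le> K0 ^ 4"
  proof -
    have "K0 \<le> K0 ^ 3" "K0 \<le> K0 ^ 4" using K1 by (simp_all add: power_increasing[of 1 _ K0, simplified])
    moreover have "4 * A * M \<le> K0" "8 * \<Lambda> * (\<rho>\<^sup>2 + 1) \<le> K0" using K0 A0 M Lp by auto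
    ultimately show "4 * A * M \<le> K0 ^ 3" "8 * \<Lambda> * (\<rho>\<^sup>2 + 1) \<le> K0 ^ 4" by linarith+
  qed
  have Ke3: "K0 ^ 3 * e ^ 3 \<le> n ^ 3"
  proof -
    have "(K0 * e) ^ 3 \<le> n ^ 3" using nK K1 e by (intro power_mono) auto
    thus ?thesis by (simp add: power_mult_distrib)
  qed
  have Ke4: "K0 ^ 4 * e ^ 4 < n ^ 4"
  proof -
    have "(K0 * e) ^ 4 < n ^ 4" using nK K1 e by (intro power_strict_mono) auto
    thus ?thesis by (simp add: power_mult_distrib)
  qed
  have fterm: "4 * (\<epsilon> * A * (n * M)) \<le> n ^ 4"
  proof -
    have "4 * (\<epsilon> * A * (n * M)) = (4 * A * M) * (e ^ 3 * n)" unfolding ee by (simp add: algebra_simps)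
    also have "\<dots> \<le> K0 ^ 3 * (e ^ 3 * n)" using K3 e n0 by (intro mult_right_mono) auto
    also have "\<dots> = (K0 ^ 3 * e ^ 3) * n" by (simp add: algebra_simps)
    also have "\<dots> \<le> n ^ 3 * n" using Ke3 n0 by (rule mult_right_mono)
    also have "\<dots> = n ^ 4" by (simp add: power_Suc2[symmetric] del: power_Suc)
    finally show ?thesis .
  qed
  have ww: "w * w = n ^ 4" unfolding w_def by (simp add: power2_eq_square power4_eq_xxxx)
  have lhs: "2 * (\<epsilon>\<^sup>2 * Re (cnj (u x0) * laplacian u x0)) \<ge> n ^ 4 / 2"
  proof -
    have "- \<mu> x0 * w = - (\<mu> x0 * w)" by simp
    thus ?thesis using eqr[folded R_def] muw aR fterm ww by linarith
  qed
  have rhs: "2 * (\<epsilon>\<^sup>2 * Re (cnj (u x0) * laplacian u x0)) \<le> 4 * \<Lambda> * (\<rho>\<^sup>2 + 1) * e ^ 4"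
  proof -
    have "2 * (\<epsilon>\<^sup>2 * Re (cnj (u x0) * laplacian u x0)) = \<epsilon>\<^sup>2 * (2 * Re (cnj (u x0) * laplacian u x0))" by simp
    also have "\<dots> \<le> \<epsilon>\<^sup>2 * (4 * (\<Lambda> * (\<rho>\<^sup>2 + 1) / \<delta>))" using up by (intro mult_left_mono) auto
    also have "\<dots> = 4 * \<Lambda> * (\<rho>\<^sup>2 + 1) * e ^ 4" unfolding ee \<delta>_def using e
      by (simp add: field_simps power2_eq_square power3_eq_cube power4_eq_xxxx)
    finally show ?thesis .
  qed
  have "8 * \<Lambda> * (\<rho>\<^sup>2 + 1) * e ^ 4 \<le> K0 ^ 4 * e ^ 4" using K4 e by (intro mult_right_mono) auto
  thus False using lhs rhs Ke4 by linarith
qed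

lemma eps_facts:
  fixes \<epsilon> :: real assumes "0 < \<epsilon>" "\<epsilon> < 1"
  shows "\<epsilon> powr (1/3) > 0" "\<epsilon> powr (1/3) \<le> 1" "\<epsilon> = (\<epsilon> powr (1/3)) ^ 3"
    "\<epsilon> powr (2/3) = (\<epsilon> powr (1/3))\<^sup>2" "\<epsilon> powr (-1/3) * \<epsilon> powr (1/3) = 1"
proof -
  show "\<epsilon> powr (1/3) > 0" using assms by simp
  show "\<epsilon> powr (1/3) \<le> 1" using assms by (intro powr_le1) auto
  have "(\<epsilon> powr (1/3)) ^ 3 = (\<epsilon> powr (1/3)) powr (real 3)"
    using assms by (subst powr_realpow) auto
  also have "\<dots> = \<epsilon>" using assms by (simp add: powr_powr)
  finally show "\<epsilon> = (\<epsilon> powr (1/3)) ^ 3" by simp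
  have "\<epsilon> powr (2/3) = \<epsilon> powr (1/3 + 1/3)" by simp
  thus "\<epsilon> powr (2/3) = (\<epsilon> powr (1/3))\<^sup>2" by (simp only: powr_add power2_eq_square)
  have "\<epsilon> powr (-1/3) = inverse (\<epsilon> powr (1/3))" by (simp add: powr_minus[symmetric])
  thus "\<epsilon> powr (-1/3) * \<epsilon> powr (1/3) = 1" using assms by simp
qed
theorem mainTheorem6:
  fixes \<mu> :: "complex \<Rightarrow> real" and \<mu>r :: "real \<Rightarrow> real"
    and f :: "complex \<Rightarrow> complex" and fr :: "real \<Rightarrow> real"
    and \<rho> :: real and A :: real
  assumes mu_smooth: "smooth \<mu>"
    and mu_rad: "\<And>x. \<mu> x = \<mu>r (cmod x)"
    and mur_smooth: "smooth \<mu>r" and mur_even: "\<And>t. \<mu>r (- t) = \<mu>r t"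
    and mu_bdd: "bounded (range \<mu>)"
    and mur_decr: "\<And>t. t > 0 \<Longrightarrow> deriv \<mu>r t < 0"
    and rho_pos: "\<rho> > 0" and mur_rho: "\<mu>r \<rho> = 0"
    and rho_unique: "\<And>t. t > 0 \<Longrightarrow> \<mu>r t = 0 \<Longrightarrow> t = \<rho>"
    and f_smooth: "smooth f"
    and f_rad: "\<And>x. f x = complex_of_real (fr (cmod x)) * (x / complex_of_real (cmod x))"
    and fr_smooth: "smooth fr" and fr_odd: "\<And>t. fr (- t) = - fr t"
    and f_L1: "integrable lborel f"
    and f_bdd: "bounded (range f)"
    and fr_pos: "\<And>t. t > 0 \<Longrightarrow> fr t > 0"
    and A_pos: "A > 0"
  shows "\<exists>\<epsilon>0>0.
     (\<exists>K>0. \<forall>\<epsilon> a u. 0 < \<epsilon> \<and> \<epsilon> < \<epsilon>0 \<and> \<bar>a\<bar> \<le> A \<and> twice_differentiable u \<and>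
         (\<forall>x. complex_of_real (\<epsilon>\<^sup>2) * laplacian u x + complex_of_real (\<mu> x) * u x
               - complex_of_real ((cmod (u x))\<^sup>2) * u x + complex_of_real (\<epsilon> * a) * f x = 0) \<and>
         (u \<longlongrightarrow> 0) at_infinity
       \<longrightarrow> (\<forall>x. cmod (u x) \<le> K * (sqrt (max (\<mu> x) 0) + \<epsilon> powr (1/3)))) \<and>
     (\<forall>s0::real. \<exists>C. \<forall>\<epsilon> a u \<theta> s1 s2. 0 < \<epsilon> \<and> \<epsilon> < \<epsilon>0 \<and> \<bar>a\<bar> \<le> A \<and> twice_differentiable u \<and>
         (\<forall>x. complex_of_real (\<epsilon>\<^sup>2) * laplacian u x + complex_of_real (\<mu> x) * u x
               - complex_of_real ((cmod (u x))\<^sup>2) * u x + complex_of_real (\<epsilon> * a) * f x = 0) \<and>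
         (u \<longlongrightarrow> 0) at_infinity \<and> s1 \<ge> s0
       \<longrightarrow> \<epsilon> powr (-1/3) * cmod (u (complex_of_real \<rho> * cis \<theta>
              + complex_of_real (\<epsilon> powr (2/3)) * (complex_of_real s1 * cis \<theta> + complex_of_real s2 * (\<i> * cis \<theta>))))
           \<le> C)"
proof -
  obtain Mf where Mf: "\<And>x. cmod (f x) \<le> Mf" using f_bdd unfolding bounded_iff by auto
  define M where "M = max Mf 0"
  have M: "M \<ge> 0" "\<And>x. cmod (f x) \<le> M" using Mf unfolding M_def by (auto intro: le_max_iff_disj[THEN iffD2])
  obtain Bm where Bm: "\<And>x. norm (\<mu> x) \<le> Bm" using mu_bdd unfolding bounded_iff by auto
  have mubd: "\<And>r. r \<ge> 0 \<Longrightarrow> \<mu>r r \<le> Bm"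
  proof -
    fix r :: real assume r: "r \<ge> 0"
    have "\<mu>r r = \<mu> (of_real r)" using mu_rad[of "of_real r"] r by simp
    thus "\<mu>r r \<le> Bm" using Bm[of "of_real r"] by simp
  qed
  have mrd: "\<And>x. \<mu>r differentiable (at x)" using mur_smooth by (cases rule: smooth.cases) auto
  obtain \<Lambda> C1 where L: "\<Lambda> > 0" "C1 > 0" and R1: "\<forall>r\<ge>0. \<mu>r r > 0 \<longrightarrow> r < \<rho>"
    and R2: "\<forall>r. 0 \<le> r \<and> r \<le> \<rho> \<longrightarrow> \<mu>r r \<le> \<Lambda> * (\<rho>\<^sup>2 - r\<^sup>2)"
    and R3: "\<forall>r. 0 \<le> r \<and> r \<le> \<rho> \<longrightarrow> \<rho>\<^sup>2 - r\<^sup>2 \<le> C1 * \<mu>r r"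
    using radial_facts[OF mrd mur_decr rho_pos mur_rho mubd] by blast
  have mub: "\<mu> x \<le> \<Lambda> * max (\<rho>\<^sup>2 - (cmod x)\<^sup>2) 0" for x
  proof (cases "\<mu> x > 0")
    case True
    hence "cmod x < \<rho>" using R1 mu_rad[of x] by auto
    hence "\<mu>r (cmod x) \<le> \<Lambda> * (\<rho>\<^sup>2 - (cmod x)\<^sup>2)" using R2 by auto
    moreover have "\<rho>\<^sup>2 - (cmod x)\<^sup>2 \<le> max (\<rho>\<^sup>2 - (cmod x)\<^sup>2) 0" by simp
    ultimately show ?thesis using mu_rad[of x] L(1) by (smt (verit) mult_left_mono)
  next
    case False
    thus ?thesis using L(1) by (smt (verit) max.cobounded2 mult_nonneg_nonneg)
  qed
  have lowb: "max (\<rho>\<^sup>2 - (cmod x)\<^sup>2) 0 \<le> C1 * max (\<mu> x) 0" for x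
  proof (cases "cmod x \<le> \<rho>")
    case True
    hence "\<rho>\<^sup>2 - (cmod x)\<^sup>2 \<le> C1 * \<mu>r (cmod x)" using R3 by auto
    moreover have "C1 * \<mu>r (cmod x) \<le> C1 * max (\<mu> x) 0" using L(2) mu_rad[of x] by (intro mult_left_mono) auto
    moreover have "(cmod x)\<^sup>2 \<le> \<rho>\<^sup>2" using True by (intro power_mono) auto
    ultimately show ?thesis by simp
  next
    case False
    hence "(cmod x)\<^sup>2 \<ge> \<rho>\<^sup>2" using rho_pos by (intro power_mono) auto
    thus ?thesis using L(2) by (simp add: max_def)
  qed
  define K0 where "K0 = 1 + 4 * A * M + 8 * \<Lambda> * (\<rho>\<^sup>2 + 1)"
  define K where "K = sqrt (K0\<^sup>2 + \<Lambda>) + sqrt (2 * \<Lambda> * C1)"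
  have Kp: "K > 0"
  proof -
    have "K0\<^sup>2 + \<Lambda> > 0" using L by (simp add: add_nonneg_pos)
    hence "sqrt (K0\<^sup>2 + \<Lambda>) > 0" by simp
    moreover have "sqrt (2 * \<Lambda> * C1) \<ge> 0" using L by simp
    ultimately show ?thesis unfolding K_def by linarith
  qed
  have P1: "cmod (u x) \<le> K * (sqrt (max (\<mu> x) 0) + \<epsilon> powr (1/3))"
    if \<epsilon>: "0 < \<epsilon>" "\<epsilon> < 1" and a: "\<bar>a\<bar> \<le> A" and tw: "twice_differentiable u"
      and eq: "\<forall>x. complex_of_real (\<epsilon>\<^sup>2) * laplacian u x + complex_of_real (\<mu> x) * u x
               - complex_of_real ((cmod (u x))\<^sup>2) * u x + complex_of_real (\<epsilon> * a) * f x = 0"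
      and lim: "(u \<longlongrightarrow> 0) at_infinity" for \<epsilon> a u x
  proof -
    define e where "e = \<epsilon> powr (1/3)"
    have e: "e > 0" "e \<le> 1" "\<epsilon> = e ^ 3" using eps_facts[OF \<epsilon>] unfolding e_def by auto
    define m where "m = max (\<mu> x) 0"
    have m0: "m \<ge> 0" unfolding m_def by simp
    have "(cmod (u x))\<^sup>2 \<le> K0\<^sup>2 * e\<^sup>2 + qf \<Lambda> (e\<^sup>2) (\<rho>\<^sup>2 - (cmod x)\<^sup>2)"
      by (rule core[OF tw eq lim e a M L(1) mub K0_def])
    also have "\<dots> \<le> K0\<^sup>2 * e\<^sup>2 + (2 * \<Lambda> * max (\<rho>\<^sup>2 - (cmod x)\<^sup>2) 0 + \<Lambda> * e\<^sup>2)"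
      using qf_upper[of "e\<^sup>2" \<Lambda>] e L by simp
    also have "\<dots> \<le> K0\<^sup>2 * e\<^sup>2 + (2 * \<Lambda> * (C1 * m) + \<Lambda> * e\<^sup>2)"
      using lowb[of x] L unfolding m_def by simp
    also have "\<dots> = (K0\<^sup>2 + \<Lambda>) * e\<^sup>2 + (2 * \<Lambda> * C1) * m" by (simp add: algebra_simps)
    finally have u2: "(cmod (u x))\<^sup>2 \<le> (K0\<^sup>2 + \<Lambda>) * e\<^sup>2 + (2 * \<Lambda> * C1) * m" .
    have "cmod (u x) = sqrt ((cmod (u x))\<^sup>2)" by simp
    also have "\<dots> \<le> sqrt ((K0\<^sup>2 + \<Lambda>) * e\<^sup>2 + (2 * \<Lambda> * C1) * m)" using u2 by (rule real_sqrt_le_mono)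
    also have "\<dots> \<le> sqrt ((K0\<^sup>2 + \<Lambda>) * e\<^sup>2) + sqrt ((2 * \<Lambda> * C1) * m)"
      using L m0 by (intro sqrt_add_le_add_sqrt) auto
    also have "\<dots> = sqrt (K0\<^sup>2 + \<Lambda>) * e + sqrt (2 * \<Lambda> * C1) * sqrt m"
      using e by (simp add: real_sqrt_mult)
    also have "\<dots> \<le> K * e + K * sqrt m" unfolding K_def using e m0 L
      by (intro add_mono mult_right_mono) auto
    finally show ?thesis unfolding m_def e_def by (simp add: algebra_simps)
  qed
  show ?thesis
  proof (rule exI[of _ 1], intro conjI)
    show "(0::real) < 1" by simp
    show "\<exists>K>0. \<forall>\<epsilon> a u. 0 < \<epsilon> \<and> \<epsilon> < 1 \<and> \<bar>a\<bar> \<le> A \<and> twice_differentiable u \<and>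
         (\<forall>x. complex_of_real (\<epsilon>\<^sup>2) * laplacian u x + complex_of_real (\<mu> x) * u x
               - complex_of_real ((cmod (u x))\<^sup>2) * u x + complex_of_real (\<epsilon> * a) * f x = 0) \<and>
         (u \<longlongrightarrow> 0) at_infinity
       \<longrightarrow> (\<forall>x. cmod (u x) \<le> K * (sqrt (max (\<mu> x) 0) + \<epsilon> powr (1/3)))"
      using P1 Kp by blast
    show "\<forall>s0::real. \<exists>C. \<forall>\<epsilon> a u \<theta> s1 s2. 0 < \<epsilon> \<and> \<epsilon> < 1 \<and> \<bar>a\<bar> \<le> A \<and> twice_differentiable u \<and>
         (\<forall>x. complex_of_real (\<epsilon>\<^sup>2) * laplacian u x + complex_of_real (\<mu> x) * u x
               - complex_of_real ((cmod (u x))\<^sup>2) * u x + complex_of_real (\<epsilon> * a) * f x = 0) \<and>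
         (u \<longlongrightarrow> 0) at_infinity \<and> s1 \<ge> s0
       \<longrightarrow> \<epsilon> powr (-1/3) * cmod (u (complex_of_real \<rho> * cis \<theta>
              + complex_of_real (\<epsilon> powr (2/3)) * (complex_of_real s1 * cis \<theta> + complex_of_real s2 * (\<i> * cis \<theta>))))
           \<le> C"
    proof
      fix s0 :: real
      define sm where "sm = max (- s0) 0"
      have sm0: "sm \<ge> 0" unfolding sm_def by simp
      show "\<exists>C. \<forall>\<epsilon> a u \<theta> s1 s2. 0 < \<epsilon> \<and> \<epsilon> < 1 \<and> \<bar>a\<bar> \<le> A \<and> twice_differentiable u \<and>
         (\<forall>x. complex_of_real (\<epsilon>\<^sup>2) * laplacian u x + complex_of_real (\<mu> x) * u x
               - complex_of_real ((cmod (u x))\<^sup>2) * u x + complex_of_real (\<epsilon> * a) * f x = 0) \<and>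
         (u \<longlongrightarrow> 0) at_infinity \<and> s1 \<ge> s0
       \<longrightarrow> \<epsilon> powr (-1/3) * cmod (u (complex_of_real \<rho> * cis \<theta>
              + complex_of_real (\<epsilon> powr (2/3)) * (complex_of_real s1 * cis \<theta> + complex_of_real s2 * (\<i> * cis \<theta>))))
           \<le> C"
      proof (intro exI[of _ "K * (sqrt (2 * \<Lambda> * \<rho> * sm) + 1)"] allI impI, elim conjE)
        fix \<epsilon> a u \<theta> s1 s2
        assume \<epsilon>1: "0 < \<epsilon>" and \<epsilon>2: "\<epsilon> < 1" and a: "\<bar>a\<bar> \<le> A" and tw: "twice_differentiable u"
          and eq: "\<forall>x. complex_of_real (\<epsilon>\<^sup>2) * laplacian u x + complex_of_real (\<mu> x) * u x
               - complex_of_real ((cmod (u x))\<^sup>2) * u x + complex_of_real (\<epsilon> * a) * f x = 0"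
          and lim: "(u \<longlongrightarrow> 0) at_infinity" and s1: "s1 \<ge> s0"
        define e where "e = \<epsilon> powr (1/3)"
        have ef: "e > 0" "\<epsilon> powr (2/3) = e\<^sup>2" "\<epsilon> powr (-1/3) * e = 1"
          using eps_facts[OF \<epsilon>1 \<epsilon>2] unfolding e_def by auto
        define x where "x = complex_of_real \<rho> * cis \<theta>
              + complex_of_real (\<epsilon> powr (2/3)) * (complex_of_real s1 * cis \<theta> + complex_of_real s2 * (\<i> * cis \<theta>))"
        have xe: "x = cis \<theta> * Complex (\<rho> + e\<^sup>2 * s1) (e\<^sup>2 * s2)"
          unfolding x_def ef(2) by (simp add: complex_eq_iff algebra_simps)
        have cx: "(cmod x)\<^sup>2 = (\<rho> + e\<^sup>2 * s1)\<^sup>2 + (e\<^sup>2 * s2)\<^sup>2"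
          unfolding xe norm_mult by (simp add: cmod_power2)
        have "\<rho>\<^sup>2 - (cmod x)\<^sup>2 \<le> 2 * \<rho> * e\<^sup>2 * sm"
        proof -
          have "\<rho>\<^sup>2 - (cmod x)\<^sup>2 = - 2 * \<rho> * (e\<^sup>2 * s1) - ((e\<^sup>2 * s1)\<^sup>2 + (e\<^sup>2 * s2)\<^sup>2)"
            unfolding cx by (simp add: power2_eq_square algebra_simps)
          also have "\<dots> \<le> - 2 * \<rho> * (e\<^sup>2 * s1)" by simp
          also have "\<dots> \<le> 2 * \<rho> * (e\<^sup>2 * sm)"
          proof -
            have "- s1 \<le> sm" using s1 unfolding sm_def by simp
            hence "e\<^sup>2 * (- s1) \<le> e\<^sup>2 * sm" by (intro mult_left_mono) auto
            hence "2 * \<rho> * (e\<^sup>2 * (- s1)) \<le> 2 * \<rho> * (e\<^sup>2 * sm)" by (rule mult_left_mono) (use rho_pos in simp)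
            moreover have "- 2 * \<rho> * (e\<^sup>2 * s1) = 2 * \<rho> * (e\<^sup>2 * (- s1))" by simp
            ultimately show ?thesis by linarith
          qed
          finally show ?thesis by (simp add: mult.assoc)
        qed
        moreover have nn: "0 \<le> 2 * \<rho> * e\<^sup>2 * sm" using rho_pos sm0 by simp
        ultimately have "max (\<rho>\<^sup>2 - (cmod x)\<^sup>2) 0 \<le> 2 * \<rho> * e\<^sup>2 * sm" by (rule max.boundedI)
        hence "\<Lambda> * max (\<rho>\<^sup>2 - (cmod x)\<^sup>2) 0 \<le> \<Lambda> * (2 * \<rho> * e\<^sup>2 * sm)" using L(1) by (intro mult_left_mono) auto
        hence "\<mu> x \<le> \<Lambda> * (2 * \<rho> * e\<^sup>2 * sm)" using mub[of x] by linarith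
        moreover have "0 \<le> \<Lambda> * (2 * \<rho> * e\<^sup>2 * sm)" using nn L(1) by simp
        ultimately have "max (\<mu> x) 0 \<le> \<Lambda> * (2 * \<rho> * e\<^sup>2 * sm)" by (rule max.boundedI)
        moreover have "\<Lambda> * (2 * \<rho> * e\<^sup>2 * sm) = (2 * \<Lambda> * \<rho> * sm) * e\<^sup>2" by (simp add: algebra_simps)
        ultimately have "sqrt (max (\<mu> x) 0) \<le> sqrt ((2 * \<Lambda> * \<rho> * sm) * e\<^sup>2)"
          by (intro real_sqrt_le_mono) simp
        also have "\<dots> = sqrt (2 * \<Lambda> * \<rho> * sm) * e" using ef(1) by (simp add: real_sqrt_mult)
        finally have sq: "sqrt (max (\<mu> x) 0) \<le> sqrt (2 * \<Lambda> * \<rho> * sm) * e" .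
        have "cmod (u x) \<le> K * (sqrt (max (\<mu> x) 0) + e)"
          using P1[OF \<epsilon>1 \<epsilon>2 a tw eq lim] unfolding e_def by blast
        also have "\<dots> \<le> K * (sqrt (2 * \<Lambda> * \<rho> * sm) * e + e)" using sq Kp by (intro mult_left_mono) auto
        finally have ub: "cmod (u x) \<le> K * (sqrt (2 * \<Lambda> * \<rho> * sm) + 1) * e" by (simp add: algebra_simps)
        have ip: "\<epsilon> powr (-1/3) \<ge> 0" by simp
        have "\<epsilon> powr (-1/3) * cmod (u x) \<le> \<epsilon> powr (-1/3) * (K * (sqrt (2 * \<Lambda> * \<rho> * sm) + 1) * e)"
          using ub ip by (rule mult_left_mono)
        also have "\<dots> = K * (sqrt (2 * \<Lambda> * \<rho> * sm) + 1) * (\<epsilon> powr (-1/3) * e)" by (simp add: algebra_simps)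
        also have "\<dots> = K * (sqrt (2 * \<Lambda> * \<rho> * sm) + 1)" using ef(3) by simp
        finally show "\<epsilon> powr (-1/3) * cmod (u (complex_of_real \<rho> * cis \<theta>
              + complex_of_real (\<epsilon> powr (2/3)) * (complex_of_real s1 * cis \<theta> + complex_of_real s2 * (\<i> * cis \<theta>))))
           \<le> K * (sqrt (2 * \<Lambda> * \<rho> * sm) + 1)" unfolding x_def .
      qed
    qed
  qed
qed

end
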